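(* Let $k$ be a field and let $r,s\in\mathbb{Z}$ be coprime. Then $r_\epsilon$ and $s_\epsilon$ generate the unit ideal of the Grothendieck–Witt ring $GW(k)$.
   Context: For $n\ge0$, $n_\epsilon:=\sum_{i=1}^n\langle(-1)^{i-1}\rangle\in GW(k)$, where $\langle a\rangle$ is the class of the rank one form $ax^2$; for $n<0$ one sets $n_\epsilon:=\epsilon\cdot(-n)_\epsilon$ with $\epsilon=-\langle-1\rangle$ (Morel's convention). *)

theory Defs
  imports "Jordan_Normal_Form.Matrix" "Jordan_Normal_Form.Determinant" "HOL-Computational_Algebra.Primes"
begin

text \<open>Symmetric bilinear forms over a field k are represented by their Gram matrices.  An element of
  GW(k) is represented by a virtual form, a pair (P, N) standing for [P] - [N].\<close>

definition nondeg_sym_form :: "'a::field mat \<Rightarrow> bool" where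
  "nondeg_sym_form B \<longleftrightarrow> square_mat B \<and> transpose_mat B = B \<and> invertible_mat B"

definition isometric :: "'a::field mat \<Rightarrow> 'a mat \<Rightarrow> bool" where
  "isometric B C \<longleftrightarrow> (\<exists>P. P \<in> carrier_mat (dim_row B) (dim_row C) \<and> invertible_mat P
      \<and> transpose_mat P * B * P = C)"

definition orth_sum :: "'a::field mat \<Rightarrow> 'a mat \<Rightarrow> 'a mat" where
  "orth_sum B C = four_block_mat B (0\<^sub>m (dim_row B) (dim_col C)) (0\<^sub>m (dim_row C) (dim_col B)) C"

definition tensor_form :: "'a::field mat \<Rightarrow> 'a mat \<Rightarrow> 'a mat" where
  "tensor_form A B = mat (dim_row A * dim_row B) (dim_col A * dim_col B)
     (\<lambda>(i, j). A $$ (i div dim_row B, j div dim_col B) * B $$ (i mod dim_row B, j mod dim_col B))"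

definition diag_form :: "'a::field list \<Rightarrow> 'a mat" where
  "diag_form xs = mat (length xs) (length xs) (\<lambda>(i, j). if i = j then xs ! i else 0)"

type_synonym 'a virtual_form = "'a mat \<times> 'a mat"

definition virtual_form :: "'a::field virtual_form \<Rightarrow> bool" where
  "virtual_form X \<longleftrightarrow> nondeg_sym_form (fst X) \<and> nondeg_sym_form (snd X)"

definition gw_eq :: "'a::field virtual_form \<Rightarrow> 'a virtual_form \<Rightarrow> bool" where
  "gw_eq X Y \<longleftrightarrow> (\<exists>E. nondeg_sym_form E \<and>
      isometric (orth_sum (orth_sum (fst X) (snd Y)) E) (orth_sum (orth_sum (fst Y) (snd X)) E))"

definition gw_zero :: "'a::field virtual_form" where
  "gw_zero = (diag_form [], diag_form [])"

definition gw_bracket :: "'a::field \<Rightarrow> 'a virtual_form" where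
  "gw_bracket a = (diag_form [a], diag_form [])"

definition gw_one :: "'a::field virtual_form" where
  "gw_one = gw_bracket 1"

definition gw_add :: "'a::field virtual_form \<Rightarrow> 'a virtual_form \<Rightarrow> 'a virtual_form" where
  "gw_add X Y = (orth_sum (fst X) (fst Y), orth_sum (snd X) (snd Y))"

definition gw_uminus :: "'a::field virtual_form \<Rightarrow> 'a virtual_form" where
  "gw_uminus X = (snd X, fst X)"

definition gw_mult :: "'a::field virtual_form \<Rightarrow> 'a virtual_form \<Rightarrow> 'a virtual_form" where
  "gw_mult X Y = (orth_sum (tensor_form (fst X) (fst Y)) (tensor_form (snd X) (snd Y)),
                  orth_sum (tensor_form (fst X) (snd Y)) (tensor_form (snd X) (fst Y)))"

definition gw_eps :: "'a::field virtual_form" where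
  "gw_eps = gw_uminus (gw_bracket (-1))"

fun gw_nat_eps :: "nat \<Rightarrow> 'a::field virtual_form" where
  "gw_nat_eps 0 = gw_zero"
| "gw_nat_eps (Suc n) = gw_add (gw_nat_eps n) (gw_bracket ((-1) ^ n))"

definition n_eps :: "int \<Rightarrow> 'a::field virtual_form" where
  "n_eps n = (if n \<ge> 0 then gw_nat_eps (nat n) else gw_mult gw_eps (gw_nat_eps (nat (- n))))"

end

theory Submission imports Defs "HOL-Combinatorics.Permutations"
begin

lemma diag_form_dims[simp]: "dim_row (diag_form xs) = length xs" "dim_col (diag_form xs) = length xs"
  by (auto simp: diag_form_def)

lemma diag_form_index[simp]: "i < length xs \<Longrightarrow> j < length xs \<Longrightarrow> diag_form xs $$ (i,j) = (if i = j then xs ! i else 0)"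
  by (auto simp: diag_form_def)

lemma diag_form_carrier: "diag_form xs \<in> carrier_mat (length xs) (length xs)"
  by auto

lemma diag_mult: "length xs = length ys \<Longrightarrow> diag_form xs * diag_form ys = diag_form (map2 (*) xs ys)"
proof (rule eq_matI)
  fix i j assume *: "length xs = length ys" "i < dim_row (diag_form (map2 (*) xs ys))" "j < dim_col (diag_form (map2 (*) xs ys))"
  have "(\<Sum>k = 0..<length ys. (if i = k then xs ! i else 0) * (if k = j then ys ! k else 0))
      = (\<Sum>k = 0..<length ys. if k = i then (if i = j then xs ! i * ys ! i else 0) else 0)"
    by (rule sum.cong) auto
  then show "(diag_form xs * diag_form ys) $$ (i, j) = diag_form (map2 (*) xs ys) $$ (i, j)"
    using * by (simp add: scalar_prod_def)
qed auto

lemma diag_transpose: "transpose_mat (diag_form xs) = diag_form xs"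
  by (rule eq_matI) auto

lemma diag_nondeg: assumes "\<forall>x\<in>set xs. x \<noteq> 0" shows "nondeg_sym_form (diag_form xs)"
proof -
  have "diag_form xs * diag_form (map inverse xs) = 1\<^sub>m (length xs)"
    using assms by (subst diag_mult) (auto intro!: eq_matI)
  moreover have "diag_form (map inverse xs) * diag_form xs = 1\<^sub>m (length xs)"
    using assms by (subst diag_mult) (auto intro!: eq_matI)
  ultimately show ?thesis unfolding nondeg_sym_form_def invertible_mat_def inverts_mat_def
    by (auto simp: diag_transpose square_mat.simps)
qed

lemma orth_sum_diag: "orth_sum (diag_form xs) (diag_form ys) = diag_form (xs @ ys)"
  unfolding orth_sum_def
  by (rule eq_matI) (auto simp: nth_append)

lemma diag_isometric:
  assumes "mset xs = mset ys"
  shows "isometric (diag_form xs) (diag_form ys)"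
proof -
  obtain p where p: "p permutes {..<length xs}" "permute_list p xs = ys"
    using mset_eq_permutation[of ys xs] assms by metis
  let ?n = "length xs"
  have len: "length ys = ?n" using p(2) by (metis length_permute_list)
  have ys: "ys ! i = xs ! p i" if "i < ?n" for i
    using p that by (auto simp: permute_list_def)
  have pin: "p i < ?n" if "i < ?n" for i using permutes_in_image[OF p(1)] that by simp
  have pinj: "p i = p k \<longleftrightarrow> i = k" for i k using p by (metis permutes_inj injD)
  define P where "P = mat ?n ?n (\<lambda>(j, i). if j = p i then (1::'a) else 0)"
  have Pc: "P \<in> carrier_mat ?n ?n" by (simp add: P_def)
  have DP: "diag_form xs * P = mat ?n ?n (\<lambda>(j,k). xs ! j * P $$ (j,k))"
  proof (rule eq_matI)
    fix j k assume jk: "j < dim_row (mat ?n ?n (\<lambda>(j,k). xs ! j * P $$ (j,k)))" "k < dim_col (mat ?n ?n (\<lambda>(j,k). xs ! j * P $$ (j,k)))"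
    have "(\<Sum>l = 0..<?n. (if j = l then xs ! j else 0) * P $$ (l, k)) = (\<Sum>l = 0..<?n. if l = j then xs ! j * P $$ (j, k) else 0)"
      by (rule sum.cong) auto
    then show "(diag_form xs * P) $$ (j, k) = mat ?n ?n (\<lambda>(j,k). xs ! j * P $$ (j,k)) $$ (j, k)"
      using jk Pc by (simp add: scalar_prod_def)
  qed (use Pc in auto)
  have main: "transpose_mat P * (diag_form xs * P) = diag_form ys"
  proof (rule eq_matI)
    fix i k assume ik: "i < dim_row (diag_form ys)" "k < dim_col (diag_form ys)"
    have "(\<Sum>j = 0..<?n. P $$ (j, i) * (xs ! j * P $$ (j, k))) = (\<Sum>j = 0..<?n. if j = p i then xs ! p i * P $$ (p i, k) else 0)"
      by (rule sum.cong) (use ik len in \<open>auto simp: P_def\<close>)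
    also have "\<dots> = xs ! p i * P $$ (p i, k)" using pin ik len by simp
    also have "\<dots> = diag_form ys $$ (i, k)" using pin ik len pinj ys by (auto simp: P_def)
    finally show "(transpose_mat P * (diag_form xs * P)) $$ (i, k) = diag_form ys $$ (i, k)"
      using ik len Pc by (simp add: DP scalar_prod_def)
  qed (use Pc len in auto)
  have PP: "transpose_mat P * P = 1\<^sub>m ?n"
  proof (rule eq_matI)
    fix i k assume ik: "i < dim_row (1\<^sub>m ?n :: 'a mat)" "k < dim_col (1\<^sub>m ?n :: 'a mat)"
    have "(\<Sum>j = 0..<?n. P $$ (j, i) * P $$ (j, k)) = (\<Sum>j = 0..<?n. if j = p i then P $$ (p i, k) else 0)"
      by (rule sum.cong) (use ik len in \<open>auto simp: P_def\<close>)
    also have "\<dots> = P $$ (p i, k)" using pin ik by simp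
    also have "\<dots> = 1\<^sub>m ?n $$ (i, k)" using pin ik pinj by (auto simp: P_def)
    finally show "(transpose_mat P * P) $$ (i, k) = 1\<^sub>m ?n $$ (i, k)"
      using ik Pc by (simp add: scalar_prod_def)
  qed (use Pc in auto)
  have PP2: "P * transpose_mat P = 1\<^sub>m ?n"
    using mat_mult_left_right_inverse[OF _ Pc PP] Pc by simp
  have "invertible_mat P"
    unfolding invertible_mat_def inverts_mat_def using PP PP2 Pc by (auto simp: square_mat.simps)
  moreover have "transpose_mat P * diag_form xs * P = diag_form ys"
  proof -
    have "transpose_mat P \<in> carrier_mat ?n ?n" using Pc by simp
    moreover have "diag_form xs \<in> carrier_mat ?n ?n" by (rule diag_form_carrier)
    ultimately show ?thesis using main assoc_mult_mat[of "transpose_mat P" ?n ?n "diag_form xs" ?n P ?n] Pc by simp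
  qed
  ultimately show ?thesis unfolding isometric_def using Pc len
    by (intro exI[of _ P]) simp
qed

definition kl :: "'b::times list \<Rightarrow> 'b list \<Rightarrow> 'b list" where
  "kl xs ys = concat (map (\<lambda>x. map ((*) x) ys) xs)"

lemma kl_Nil[simp]: "kl [] ys = []" and kl_Cons[simp]: "kl (x # xs) ys = map ((*) x) ys @ kl xs ys"
  by (auto simp: kl_def)

lemma length_kl[simp]: "length (kl xs ys) = length xs * length ys"
  by (induction xs) auto

lemma nth_kl: "i < length xs * length ys \<Longrightarrow> kl xs ys ! i = xs ! (i div length ys) * ys ! (i mod length ys)"
proof (induction xs arbitrary: i)
  case (Cons x xs)
  show ?case
  proof (cases "i < length ys")
    case True then show ?thesis by (simp add: nth_append)
  next
    case False
    then have lt: "i - length ys < length xs * length ys" using Cons.prems by auto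
    have n: "length ys > 0" using False Cons.prems by (cases "length ys") auto
    have d: "i div length ys = Suc ((i - length ys) div length ys)" using n False by (simp add: le_div_geq)
    from Cons.IH[OF lt] False show ?thesis
      using Cons.prems by (simp add: nth_append d le_mod_geq)
  qed
qed simp

lemma sum_kl: "sum_list (kl xs ys) = sum_list xs * (sum_list ys :: 'b::comm_semiring_1)"
  by (induction xs) (auto simp: sum_list_const_mult distrib_right)

lemma set_kl: "set (kl xs ys) = {x * y | x y. x \<in> set xs \<and> y \<in> set ys}"
  by (auto simp: kl_def)

lemma map_kl: "map (of_int :: int \<Rightarrow> 'a::ring_1) (kl xs ys) = kl (map of_int xs) (map of_int ys)"
  by (induction xs) auto

lemma tensor_diag: "tensor_form (diag_form xs) (diag_form ys) = diag_form (kl xs ys)"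
proof (rule eq_matI)
  fix i j assume ij: "i < dim_row (diag_form (kl xs ys))" "j < dim_col (diag_form (kl xs ys))"
  let ?n = "length ys"
  have i: "i < length xs * ?n" and j: "j < length xs * ?n" using ij by auto
  then have n: "?n > 0" by (cases "?n = 0") auto
  have "i div ?n < length xs" "j div ?n < length xs" using i j
    by (simp_all add: less_mult_imp_div_less)
  moreover have "i mod ?n < ?n" "j mod ?n < ?n" using n by auto
  moreover have "(i div ?n = j div ?n \<and> i mod ?n = j mod ?n) \<longleftrightarrow> i = j"
    by (metis div_mult_mod_eq)
  ultimately show "tensor_form (diag_form xs) (diag_form ys) $$ (i, j) = diag_form (kl xs ys) $$ (i, j)"
    using i j by (auto simp: tensor_form_def nth_kl)
qed (auto simp: tensor_form_def)

definition FF :: "int list \<Rightarrow> int list \<Rightarrow> 'a::field virtual_form" where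
  "FF A B = (diag_form (map of_int A), diag_form (map of_int B))"

lemma gw_add_FF: "gw_add (FF A B) (FF C D) = FF (A @ C) (B @ D)"
  by (simp add: FF_def gw_add_def orth_sum_diag)

lemma gw_mult_FF: "gw_mult (FF A B) (FF C D) = FF (kl A C @ kl B D) (kl A D @ kl B C)"
  by (simp add: FF_def gw_mult_def orth_sum_diag tensor_diag map_kl)

lemma gw_eq_FF: "mset (A @ D) = mset (C @ B) \<Longrightarrow> gw_eq (FF A B) (FF C D :: 'a::field virtual_form)"
  unfolding gw_eq_def
proof (intro exI[of _ "diag_form []"] conjI)
  show "nondeg_sym_form (diag_form ([]::'a list))" by (rule diag_nondeg) simp
  assume "mset (A @ D) = mset (C @ B)"
  then have "mset (map (of_int :: int \<Rightarrow> 'a) (A @ D)) = mset (map of_int (C @ B))"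
    by (metis mset_map)
  then have "isometric (diag_form (map (of_int :: int \<Rightarrow> 'a) A @ map of_int D @ []))
      (diag_form (map of_int C @ map of_int B @ []))"
    by (intro diag_isometric) simp
  then show "isometric (orth_sum (orth_sum (fst (FF A B :: 'a virtual_form)) (snd (FF C D :: 'a virtual_form))) (diag_form []))
     (orth_sum (orth_sum (fst (FF C D :: 'a virtual_form)) (snd (FF A B :: 'a virtual_form))) (diag_form []))"
    by (simp add: FF_def orth_sum_diag)
qed

definition pm :: "int list \<Rightarrow> bool" where "pm A \<longleftrightarrow> set A \<subseteq> {1, -1}"

lemma pm_simps[simp]: "pm []" "pm (A @ B) \<longleftrightarrow> pm A \<and> pm B" "pm (x # A) \<longleftrightarrow> (x = 1 \<or> x = -1) \<and> pm A"
  by (auto simp: pm_def)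

lemma pm_mult: "x \<in> {1,-1::int} \<Longrightarrow> y \<in> {1,-1} \<Longrightarrow> x * y \<in> {1,-1}" by auto

lemma pm_kl: "pm A \<Longrightarrow> pm B \<Longrightarrow> pm (kl A B)"
  unfolding pm_def set_kl using pm_mult by blast

lemma pm_nz: "x \<in> {1,-1::int} \<Longrightarrow> (of_int x::'a::field) \<noteq> 0" by auto

lemma virtual_FF: "pm A \<Longrightarrow> pm B \<Longrightarrow> virtual_form (FF A B :: 'a::field virtual_form)"
  unfolding virtual_form_def FF_def pm_def
  using pm_nz by (force intro!: diag_nondeg)

lemma pm_count: "pm A \<Longrightarrow> 2 * int (count (mset A) 1) = int (length A) + sum_list A
   \<and> count (mset A) 1 + count (mset A) (-1) = length A"
  by (induction A) auto

lemma pm_mset_eq: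
  assumes "pm A" "pm B" "length A = length B" "sum_list A = sum_list B"
  shows "mset A = mset B"
proof (rule multiset_eqI)
  fix x
  have c1: "count (mset A) 1 = count (mset B) 1" using pm_count[OF assms(1)] pm_count[OF assms(2)] assms(3,4) by linarith
  moreover have "count (mset A) (-1) = count (mset B) (-1)" using pm_count[OF assms(1)] pm_count[OF assms(2)] assms(3) c1 by linarith
  moreover have "x \<notin> {1,-1} \<Longrightarrow> count (mset A) x = 0 \<and> count (mset B) x = 0"
    using assms(1,2) by (auto simp: pm_def count_eq_zero_iff)
  ultimately show "count (mset A) x = count (mset B) x" by (metis count_mset_0_iff insertCI singletonD insertE)
qed

definition alt :: "nat \<Rightarrow> int list" where "alt n = map (\<lambda>i. (-1) ^ i) [0..<n]"

lemma alt_Suc: "alt (Suc n) = alt n @ [(-1)^n]" by (simp add: alt_def)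
lemma alt_props: "pm (alt n) \<and> length (alt n) = n \<and> sum_list (alt n) = (if even n then 0 else 1)"
  by (induction n) (auto simp: alt_Suc, auto simp: alt_def)

lemma gw_nat_eps_FF: "gw_nat_eps n = (FF (alt n) [] :: 'a::field virtual_form)"
proof (induction n)
  case 0 show ?case by (simp add: gw_zero_def FF_def alt_def)
next
  case (Suc n)
  have "gw_bracket ((-1) ^ n) = (FF [(-1)^n] [] :: 'a virtual_form)"
    by (simp add: gw_bracket_def FF_def)
  then show ?case using Suc by (simp add: gw_add_FF alt_Suc)
qed

lemma gw_eps_FF: "gw_eps = (FF [] [-1] :: 'a::field virtual_form)"
  by (simp add: gw_eps_def gw_uminus_def gw_bracket_def FF_def)

lemma gw_one_FF: "gw_one = (FF [1] [] :: 'a::field virtual_form)"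
  by (simp add: gw_one_def gw_bracket_def FF_def)

lemma n_eps_FF: "\<exists>P N. n_eps r = (FF P N :: 'a::field virtual_form) \<and> pm P \<and> pm N \<and>
   int (length P) - int (length N) = r \<and> sum_list P - sum_list N = (if even r then 0 else 1)"
proof (cases "r \<ge> 0")
  case True
  then show ?thesis using alt_props[of "nat r"]
    by (intro exI[of _ "alt (nat r)"] exI[of _ "[]"]) (auto simp: n_eps_def gw_nat_eps_FF even_nat_iff)
next
  case False
  let ?m = "nat (- r)"
  have "n_eps r = (FF (kl [] (alt ?m) @ kl [-1] []) (kl [] [] @ kl [-1] (alt ?m)) :: 'a virtual_form)"
    using False by (simp only: n_eps_def gw_nat_eps_FF gw_eps_FF gw_mult_FF if_False)
  moreover have "pm (kl [-1] (alt ?m))" using alt_props[of ?m] by (intro pm_kl) auto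
  moreover have "sum_list (kl [-1] (alt ?m)) = - (if even r then 0 else 1)"
    using alt_props[of ?m] False by (simp add: sum_kl even_nat_iff)
  ultimately show ?thesis using False alt_props[of ?m]
    by (intro exI[of _ "kl [] (alt ?m) @ kl [-1] []"] exI[of _ "kl [] [] @ kl [-1] (alt ?m)"]) simp
qed

lemma realize: assumes "even (a - b)"
  shows "\<exists>A B. pm A \<and> pm B \<and> int (length A) - int (length B) = a \<and> sum_list A - sum_list B = b"
proof -
  obtain q where q: "a - b = 2 * q" using assms by blast
  define p where "p = b + q"
  have pq: "p + q = a" "p - q = b" using q unfolding p_def by auto
  let ?A = "replicate (nat p) (1::int) @ replicate (nat q) (-1)"
  let ?B = "replicate (nat (-p)) (1::int) @ replicate (nat (-q)) (-1)"
  have "pm ?A" "pm ?B" by (auto simp: pm_def)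
  moreover have "int (length ?A) - int (length ?B) = a" using pq by simp
  moreover have "sum_list ?A - sum_list ?B = b" using pq by (simp add: sum_list_replicate)
  ultimately show ?thesis by blast
qed

theorem lemma2p10:
  fixes r s :: int
  assumes "coprime r s"
  shows "\<exists>X Y :: 'a::field virtual_form. virtual_form X \<and> virtual_form Y \<and>
           gw_eq (gw_add (gw_mult X (n_eps r)) (gw_mult Y (n_eps s))) gw_one"
proof -
  obtain x1 y1 where b: "x1 * r + y1 * s = 1" using bezout_int[of r s] assms by auto
  define r' :: int where "r' = (if even r then 0 else 1)"
  define s' :: int where "s' = (if even s then 0 else 1)"
  have notboth: "odd r \<or> odd s" using assms by (metis even_add even_mult_iff odd_one b)
  obtain x2 y2 where xy2: "even (x1 - x2)" "even (y1 - y2)" "x2 * r' + y2 * s' = 1"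
  proof -
    have e1: "even (r - r')" "even (s - s')" unfolding r'_def s'_def by auto
    have e2: "even (x1 * (r - r') + y1 * (s - s'))" using e1 by auto
    have "x1 * r' + y1 * s' - 1 = (x1 * r + y1 * s - 1) - (x1 * (r - r') + y1 * (s - s'))"
      by (simp add: algebra_simps)
    then have "even (x1 * r' + y1 * s' - 1)" using e2 b by simp
    then obtain k where k: "x1 * r' + y1 * s' - 1 = 2 * k" by blast
    show ?thesis
    proof (cases "odd r")
      case True
      show ?thesis by (rule that[of "x1 - 2 * k" y1]) (use True k in \<open>auto simp: r'_def\<close>)
    next
      case False
      then have "odd s" using notboth by blast
      show ?thesis by (rule that[of x1 "y1 - 2 * k"]) (use False \<open>odd s\<close> k in \<open>auto simp: s'_def r'_def\<close>)
    qed
  qed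
  obtain XA XB where X: "pm XA" "pm XB" "int (length XA) - int (length XB) = x1" "sum_list XA - sum_list XB = x2"
    using realize[of x1 x2] xy2(1) by blast
  obtain YA YB where Y: "pm YA" "pm YB" "int (length YA) - int (length YB) = y1" "sum_list YA - sum_list YB = y2"
    using realize[of y1 y2] xy2(2) by blast
  obtain RA RB where R: "n_eps r = (FF RA RB :: 'a virtual_form)" "pm RA" "pm RB"
    "int (length RA) - int (length RB) = r" "sum_list RA - sum_list RB = r'"
    using n_eps_FF[of r] unfolding r'_def by blast
  obtain SA SB where S: "n_eps s = (FF SA SB :: 'a virtual_form)" "pm SA" "pm SB"
    "int (length SA) - int (length SB) = s" "sum_list SA - sum_list SB = s'"
    using n_eps_FF[of s] unfolding s'_def by blast
  define P where "P = (kl XA RA @ kl XB RB) @ (kl YA SA @ kl YB SB)"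
  define N where "N = (kl XA RB @ kl XB RA) @ (kl YA SB @ kl YB SA)"
  have tot: "gw_add (gw_mult (FF XA XB) (n_eps r)) (gw_mult (FF YA YB) (n_eps s)) = (FF P N :: 'a virtual_form)"
    unfolding R S P_def N_def by (simp add: gw_mult_FF gw_add_FF)
  have pmP: "pm P" "pm N" unfolding P_def N_def using X Y R S by (auto intro: pm_kl)
  have "int (length P) - int (length N) =
     (int (length XA) - int (length XB)) * (int (length RA) - int (length RB)) +
     (int (length YA) - int (length YB)) * (int (length SA) - int (length SB))"
    unfolding P_def N_def by (simp add: algebra_simps)
  then have lP: "length (P @ []) = length ([1] @ N)" using X Y R S b by simp
  have "sum_list P - sum_list N =
     (sum_list XA - sum_list XB) * (sum_list RA - sum_list RB) +
     (sum_list YA - sum_list YB) * (sum_list SA - sum_list SB)"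
    unfolding P_def N_def by (simp add: sum_kl algebra_simps)
  then have sP: "sum_list (P @ []) = sum_list ([1] @ N)" using X Y R S xy2(3) by simp
  have "mset (P @ []) = mset ([1] @ N)"
    by (rule pm_mset_eq[OF _ _ lP sP]) (use pmP in auto)
  then have "gw_eq (FF P N) (FF [1] [] :: 'a virtual_form)" by (rule gw_eq_FF)
  then show ?thesis using tot X Y unfolding gw_one_FF
    by (intro exI[of _ "FF XA XB"] exI[of _ "FF YA YB"]) (simp add: virtual_FF)
qed

end
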